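(* Consider the discrete first-price auction in the model with ties with $n=2$ bidders whose values are drawn independently and uniformly from $X=\{0,1,\dots,x\}$, where $x\ge10$. If $\beta$ is a symmetric equilibrium, then $\beta(v)=\lfloor v/2\rfloor$ for all $v\in X$. Consequently, if moreover $x$ is even, the auction has no symmetric equilibrium.
   Context: Model. Two risk-neutral bidders compete for one indivisible object. Values and bids lie in $X=\{0,1,2,\dots,x\}$; each bidder's value is drawn independently and uniformly from $X$. A (pure) strategy is a bidding function $\beta:X\to X$. In the model with ties, the higher bidder wins and, if the two bids are equal, each wins with probability $1/2$. In the first-price auction, a bidder with value $v_i$ bidding $b_i$ gets expected payoff $(v_i-b_i)\Pr(i\text{ wins})$. An equilibrium is a profile of bidding functions such that each bidder's bidding function maximises their expected payoff given the other's (a pure-strategy Bayes–Nash equilibrium) and such that no bidder uses a weakly dominated bidding function (a bidding function is weakly dominated if some other bidding function yields at least as high expected payoff against every opponent bidding function, and strictly higher against some). A symmetric equilibrium is an equilibrium in which both bidders use the same bidding function. *)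

theory Defs
  imports Complex_Main
begin

text \<open>Values and bids lie in X = {0..x}. A bidding function is a map nat => nat
  sending X into X (values outside X are irrelevant).\<close>

definition strategy :: "nat \<Rightarrow> (nat \<Rightarrow> nat) \<Rightarrow> bool" where
  "strategy x \<beta> \<longleftrightarrow> (\<forall>v\<le>x. \<beta> v \<le> x)"

text \<open>Probability that a bid b wins against an opponent using bidding function \<gamma>
  whose value is uniform on X; ties are broken by a fair coin.\<close>

definition win_prob :: "nat \<Rightarrow> nat \<Rightarrow> (nat \<Rightarrow> nat) \<Rightarrow> real" where
  "win_prob x b \<gamma> =
     (real (card {w \<in> {0..x}. \<gamma> w < b}) + real (card {w \<in> {0..x}. \<gamma> w = b}) / 2)
     / real (x + 1)"

definition interim_payoff :: "nat \<Rightarrow> nat \<Rightarrow> nat \<Rightarrow> (nat \<Rightarrow> nat) \<Rightarrow> real" where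
  "interim_payoff x v b \<gamma> = (real v - real b) * win_prob x b \<gamma>"

definition payoff :: "nat \<Rightarrow> (nat \<Rightarrow> nat) \<Rightarrow> (nat \<Rightarrow> nat) \<Rightarrow> real" where
  "payoff x \<beta> \<gamma> = (\<Sum>v=0..x. interim_payoff x v (\<beta> v) \<gamma>) / real (x + 1)"

definition best_response :: "nat \<Rightarrow> (nat \<Rightarrow> nat) \<Rightarrow> (nat \<Rightarrow> nat) \<Rightarrow> bool" where
  "best_response x \<beta> \<gamma> \<longleftrightarrow> strategy x \<beta> \<and>
     (\<forall>\<beta>'. strategy x \<beta>' \<longrightarrow> payoff x \<beta>' \<gamma> \<le> payoff x \<beta> \<gamma>)"

definition weakly_dominated :: "nat \<Rightarrow> (nat \<Rightarrow> nat) \<Rightarrow> bool" where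
  "weakly_dominated x \<beta> \<longleftrightarrow> (\<exists>\<beta>'. strategy x \<beta>' \<and>
     (\<forall>\<gamma>. strategy x \<gamma> \<longrightarrow> payoff x \<beta> \<gamma> \<le> payoff x \<beta>' \<gamma>) \<and>
     (\<exists>\<gamma>. strategy x \<gamma> \<and> payoff x \<beta> \<gamma> < payoff x \<beta>' \<gamma>))"

definition equilibrium :: "nat \<Rightarrow> (nat \<Rightarrow> nat) \<Rightarrow> (nat \<Rightarrow> nat) \<Rightarrow> bool" where
  "equilibrium x \<beta>1 \<beta>2 \<longleftrightarrow>
     best_response x \<beta>1 \<beta>2 \<and> best_response x \<beta>2 \<beta>1 \<and>
     \<not> weakly_dominated x \<beta>1 \<and> \<not> weakly_dominated x \<beta>2"

definition symmetric_equilibrium :: "nat \<Rightarrow> (nat \<Rightarrow> nat) \<Rightarrow> bool" where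
  "symmetric_equilibrium x \<beta> \<longleftrightarrow> equilibrium x \<beta> \<beta>"

end

theory Submission imports Defs begin

definition Lc :: "nat \<Rightarrow> (nat \<Rightarrow> nat) \<Rightarrow> nat \<Rightarrow> nat" where
  "Lc x \<beta> b = card {w \<in> {0..x}. \<beta> w < b}"

lemma Ec_eq: "card {w \<in> {0..x}. \<beta> w = b} = Lc x \<beta> (Suc b) - Lc x \<beta> b"
   "Lc x \<beta> b \<le> Lc x \<beta> (Suc b)"
proof -
  have u: "{w \<in> {0..x}. \<beta> w < Suc b} = {w \<in> {0..x}. \<beta> w < b} \<union> {w \<in> {0..x}. \<beta> w = b}"
    by auto
  have "card ({w \<in> {0..x}. \<beta> w < b} \<union> {w \<in> {0..x}. \<beta> w = b}) =
     card {w \<in> {0..x}. \<beta> w < b} + card {w \<in> {0..x}. \<beta> w = b}"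
    by (rule card_Un_disjoint) auto
  then show "card {w \<in> {0..x}. \<beta> w = b} = Lc x \<beta> (Suc b) - Lc x \<beta> b"
   "Lc x \<beta> b \<le> Lc x \<beta> (Suc b)"
    unfolding Lc_def u by auto
qed

lemma win_prob_Lc: "win_prob x b \<beta> = (real (Lc x \<beta> b) + real (Lc x \<beta> (Suc b))) / (2 * real (x+1))"
proof -
  have "real (card {w \<in> {0..x}. \<beta> w = b}) = real (Lc x \<beta> (Suc b)) - real (Lc x \<beta> b)"
    using Ec_eq[of x \<beta> b] by (simp add: of_nat_diff)
  then show ?thesis unfolding win_prob_def Lc_def[symmetric] by (simp add: field_simps)
qed

lemma payoff_upd:
  assumes "v \<le> x"
  shows "payoff x (\<beta>(v:=b)) \<gamma> = payoff x \<beta> \<gamma> +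
     (interim_payoff x v b \<gamma> - interim_payoff x v (\<beta> v) \<gamma>) / real (x+1)"
proof -
  have vin: "v \<in> {0..x}" using assms by simp
  have a: "(\<Sum>u=0..x. interim_payoff x u ((\<beta>(v:=b)) u) \<gamma>) =
     interim_payoff x v b \<gamma> + (\<Sum>u\<in>{0..x}-{v}. interim_payoff x u (\<beta> u) \<gamma>)"
  proof -
    have "(\<Sum>u\<in>{0..x}-{v}. interim_payoff x u ((\<beta>(v:=b)) u) \<gamma>) = (\<Sum>u\<in>{0..x}-{v}. interim_payoff x u (\<beta> u) \<gamma>)"
      by (rule sum.cong) auto
    then show ?thesis
      using sum.remove[OF _ vin, of "\<lambda>u. interim_payoff x u ((\<beta>(v:=b)) u) \<gamma>"] by simp
  qed
  have b: "(\<Sum>u=0..x. interim_payoff x u (\<beta> u) \<gamma>) =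
     interim_payoff x v (\<beta> v) \<gamma> + (\<Sum>u\<in>{0..x}-{v}. interim_payoff x u (\<beta> u) \<gamma>)"
    using sum.remove[OF _ vin, of "\<lambda>u. interim_payoff x u (\<beta> u) \<gamma>"] by simp
  show ?thesis unfolding payoff_def a b by (simp add: add_divide_distrib diff_divide_distrib)
qed

lemma Lc_mono: "b \<le> b' \<Longrightarrow> Lc x \<beta> b \<le> Lc x \<beta> b'"
  unfolding Lc_def by (rule card_mono) auto

lemma Lc_le: "Lc x \<beta> b \<le> x + 1"
proof -
  have "Lc x \<beta> b \<le> card {0..x}" unfolding Lc_def by (rule card_mono) auto
  then show ?thesis by simp
qed

lemma Lc_lower: "s \<le> x + 1 \<Longrightarrow> (\<forall>w<s. \<beta> w < b) \<Longrightarrow> s \<le> Lc x \<beta> b"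
proof -
  assume a: "s \<le> x + 1" "\<forall>w<s. \<beta> w < b"
  have "card {0..<s} \<le> Lc x \<beta> b" unfolding Lc_def by (rule card_mono) (use a in auto)
  then show ?thesis by simp
qed

lemma Lc_step: "v \<le> x \<Longrightarrow> \<beta> v = b \<Longrightarrow> Lc x \<beta> b + 1 \<le> Lc x \<beta> (Suc b)"
proof -
  assume a: "v \<le> x" "\<beta> v = b"
  have "card {v} \<le> card {w \<in> {0..x}. \<beta> w = b}" by (rule card_mono) (use a in auto)
  then show ?thesis using Ec_eq[of x \<beta> b] by simp
qed

lemma Lc_all: "\<forall>w\<le>x. \<beta> w < b \<Longrightarrow> Lc x \<beta> b = x + 1"
proof -
  assume "\<forall>w\<le>x. \<beta> w < b"
  then have "{w \<in> {0..x}. \<beta> w < b} = {0..x}" by auto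
  then show ?thesis unfolding Lc_def by simp
qed

definition monob :: "nat \<Rightarrow> (nat \<Rightarrow> nat) \<Rightarrow> bool" where
  "monob x \<beta> \<longleftrightarrow> (\<forall>v v'. v \<le> v' \<longrightarrow> v' \<le> x \<longrightarrow> \<beta> v \<le> \<beta> v')"

lemma Lc_eq: assumes m: "monob x \<beta>" and s: "s \<le> x" and lo: "\<forall>w<s. \<beta> w < b" and hi: "b \<le> \<beta> s"
  shows "Lc x \<beta> b = s"
proof -
  have "{w \<in> {0..x}. \<beta> w < b} = {0..<s}"
  proof (intro set_eqI iffI)
    fix w assume w: "w \<in> {w \<in> {0..x}. \<beta> w < b}"
    show "w \<in> {0..<s}"
    proof (rule ccontr)
      assume "w \<notin> {0..<s}"
      then have "s \<le> w" by simp
      then have "\<beta> s \<le> \<beta> w" using m w unfolding monob_def by auto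
      then show False using w hi by simp
    qed
  next
    fix w assume "w \<in> {0..<s}" then show "w \<in> {w \<in> {0..x}. \<beta> w < b}" using lo s by auto
  qed
  then show ?thesis unfolding Lc_def by simp
qed

lemma Lc_ext: assumes m: "monob x \<beta>" and s: "s \<le> x" and bs: "\<beta> s = b"
  and n: "\<not> (s + k \<le> x \<and> \<beta> (s + k) = b)"
  shows "Lc x \<beta> (Suc b) \<le> s + k"
proof -
  have "{w \<in> {0..x}. \<beta> w < Suc b} \<subseteq> {0..<s+k}"
  proof
    fix w assume w: "w \<in> {w \<in> {0..x}. \<beta> w < Suc b}"
    show "w \<in> {0..<s+k}"
    proof (rule ccontr)
      assume "w \<notin> {0..<s+k}"
      then have sw: "s + k \<le> w" by simp
      then have a1: "\<beta> (s+k) \<le> \<beta> w" using m w unfolding monob_def by auto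
      have a2: "\<beta> s \<le> \<beta> (s+k)" using m w sw unfolding monob_def by auto
      show False using a1 a2 w bs n sw by auto
    qed
  qed
  then have "Lc x \<beta> (Suc b) \<le> card {0..<s+k}" unfolding Lc_def by (rule card_mono[rotated]) auto
  then show ?thesis by simp
qed

lemma win_prob_nonneg: "0 \<le> win_prob x b \<gamma>"
  unfolding win_prob_def by simp

locale eqm =
  fixes x :: nat and \<beta> :: "nat \<Rightarrow> nat"
  assumes eq: "symmetric_equilibrium x \<beta>" and x10: "10 \<le> x"
begin

abbreviation l :: "nat \<Rightarrow> real" where "l b \<equiv> real (Lc x \<beta> b)"

lemma br: "best_response x \<beta> \<beta>" using eq unfolding symmetric_equilibrium_def equilibrium_def by simp
lemma nd: "\<not> weakly_dominated x \<beta>" using eq unfolding symmetric_equilibrium_def equilibrium_def by simp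
lemma strat: "strategy x \<beta>" using br unfolding best_response_def by simp

lemma BRi: assumes v: "v \<le> x" and b: "b \<le> x"
  shows "interim_payoff x v b \<beta> \<le> interim_payoff x v (\<beta> v) \<beta>"
proof -
  have "strategy x (\<beta>(v:=b))" using strat b unfolding strategy_def by auto
  then have "payoff x (\<beta>(v:=b)) \<beta> \<le> payoff x \<beta> \<beta>" using br unfolding best_response_def by blast
  then have "(interim_payoff x v b \<beta> - interim_payoff x v (\<beta> v) \<beta>) / real (x+1) \<le> 0"
    using payoff_upd[OF v, of \<beta> b \<beta>] by simp
  then show ?thesis by (simp add: divide_le_0_iff)
qed

lemma BR: assumes v: "v \<le> x" and b: "b \<le> x"
  shows "(real v - real b) * (l b + l (Suc b)) \<le> (real v - real (\<beta> v)) * (l (\<beta> v) + l (Suc (\<beta> v)))"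
proof -
  have "(real v - real b) * ((l b + l (Suc b)) / (2 * real (x+1))) \<le>
        (real v - real (\<beta> v)) * ((l (\<beta> v) + l (Suc (\<beta> v))) / (2 * real (x+1)))"
    using BRi[OF v b] unfolding interim_payoff_def win_prob_Lc .
  then have "((real v - real b) * (l b + l (Suc b))) / (2 * real (x+1)) \<le>
        ((real v - real (\<beta> v)) * (l (\<beta> v) + l (Suc (\<beta> v)))) / (2 * real (x+1))"
    by (simp add: times_divide_eq_right)
  then show ?thesis by (simp add: divide_le_cancel)
qed

lemma UD: assumes v1: "1 \<le> v" and vx: "v \<le> x" shows "\<beta> v < v"
proof (rule ccontr)
  assume "\<not> \<beta> v < v"
  then have bv: "v \<le> \<beta> v" by simp
  define \<beta>' where "\<beta>' = \<beta>(v := v - 1)"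
  have s': "strategy x \<beta>'" using strat vx unfolding strategy_def \<beta>'_def by auto
  have le: "interim_payoff x v (\<beta> v) \<gamma> \<le> 0" for \<gamma>
    unfolding interim_payoff_def using bv win_prob_nonneg[of x "\<beta> v" \<gamma>]
    by (simp add: mult_nonpos_nonneg)
  have ge: "0 \<le> interim_payoff x v (v - 1) \<gamma>" for \<gamma>
    unfolding interim_payoff_def using v1 win_prob_nonneg[of x "v-1" \<gamma>] by simp
  have all: "\<forall>\<gamma>. strategy x \<gamma> \<longrightarrow> payoff x \<beta> \<gamma> \<le> payoff x \<beta>' \<gamma>"
  proof (intro allI impI)
    fix \<gamma> show "payoff x \<beta> \<gamma> \<le> payoff x \<beta>' \<gamma>"
      unfolding \<beta>'_def payoff_upd[OF vx] using le[of \<gamma>] ge[of \<gamma>] by simp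
  qed
  have z: "strategy x (\<lambda>_. 0)" unfolding strategy_def by simp
  have "Lc x (\<lambda>_. 0) (Suc (v-1)) = x + 1" by (rule Lc_all) simp
  then have "0 < win_prob x (v-1) (\<lambda>_. 0)" unfolding win_prob_Lc by simp
  then have "0 < interim_payoff x v (v - 1) (\<lambda>_. 0)" unfolding interim_payoff_def using v1 by simp
  then have "payoff x \<beta> (\<lambda>_. 0) < payoff x \<beta>' (\<lambda>_. 0)"
    unfolding \<beta>'_def payoff_upd[OF vx] using le[of "\<lambda>_. 0"] by simp
  then have "weakly_dominated x \<beta>" unfolding weakly_dominated_def using s' all z by blast
  then show False using nd by simp
qed

lemma bx: "v \<le> x \<Longrightarrow> \<beta> v \<le> x" using strat unfolding strategy_def by simp

lemma mono: "monob x \<beta>"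
  unfolding monob_def
proof (intro allI impI)
  fix v v' assume vv: "v \<le> v'" and v'x: "v' \<le> x"
  show "\<beta> v \<le> \<beta> v'"
  proof (rule ccontr)
    assume "\<not> \<beta> v \<le> \<beta> v'"
    then have lt: "\<beta> v' < \<beta> v" by simp
    then have vlt: "v < v'" using vv by (cases "v = v'") auto
    define b where "b = \<beta> v"
    define b' where "b' = \<beta> v'"
    have vx: "v \<le> x" using vv v'x by simp
    have 1: "(real v - real b') * (l b' + l (Suc b')) \<le> (real v - real b) * (l b + l (Suc b))"
      using BR[OF vx bx[OF v'x]] unfolding b_def b'_def .
    have 2: "(real v' - real b) * (l b + l (Suc b)) \<le> (real v' - real b') * (l b' + l (Suc b'))"
      using BR[OF v'x bx[OF vx]] unfolding b_def b'_def .
    have "(real v' - real v) * ((l b + l (Suc b)) - (l b' + l (Suc b'))) \<le> 0"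
      using 1 2 by (simp add: algebra_simps)
    moreover have "0 < real v' - real v" using vlt by simp
    ultimately have w: "l b + l (Suc b) \<le> l b' + l (Suc b')"
      by (simp add: mult_le_0_iff)
    have a1: "l (Suc b') \<le> l b" proof -
      have "Lc x \<beta> (Suc b') \<le> Lc x \<beta> b" by (rule Lc_mono) (use lt in \<open>simp add: b_def b'_def\<close>)
      then show ?thesis by simp
    qed
    have a2: "l b' + 1 \<le> l (Suc b')" using Lc_step[OF v'x, of \<beta> b'] unfolding b'_def by simp
    have a3: "l b \<le> l (Suc b)" using Lc_mono[of b "Suc b"] by simp
    show False using w a1 a2 a3 by simp
  qed
qed


lemma gap: assumes s: "s \<le> x" and b1: "1 \<le> \<beta> s" and d: "2 * (s - \<beta> s) < s"
  and lo: "\<forall>w<s. \<beta> w + 1 < \<beta> s" shows False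
proof -
  define b where "b = \<beta> s"
  have s1: "1 \<le> s" using d by simp
  have bs: "b < s" using UD[OF s1 s] unfolding b_def .
  have l1: "Lc x \<beta> (b - 1) = s" by (rule Lc_eq[OF mono s]) (use lo b1 in \<open>auto simp: b_def\<close>)
  have l2: "Lc x \<beta> b = s" by (rule Lc_eq[OF mono s]) (use lo b1 in \<open>auto simp: b_def\<close>)
  have sb: "Suc (b - 1) = b" using b1 b_def by simp
  have "(real s - real (b - 1)) * (l (b - 1) + l (Suc (b - 1))) \<le> (real s - real b) * (l b + l (Suc b))"
    using BR[OF s, of "b - 1"] s bs unfolding b_def by simp
  then have e1: "(real s - real b + 1) * (2 * real s) \<le> (real s - real b) * (2 * real s + (l (Suc b) - real s))"
    using l1 l2 sb b1 b_def by (simp add: of_nat_diff algebra_simps)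
  define D where "D = real s - real b"
  define c where "c = l (Suc b) - real s"
  have Dp: "0 < D" using bs D_def by simp
  have e1': "2 * real s \<le> D * c" using e1 unfolding D_def[symmetric] c_def[symmetric] by (simp add: algebra_simps)
  have dd: "2 * D < real s"
  proof -
    have "real (2 * (s - b)) < real s" using d b_def by (simp only: of_nat_less_iff)
    then show ?thesis using bs by (simp add: of_nat_diff D_def)
  qed
  have c4: "4 < c"
  proof (rule ccontr)
    assume "\<not> 4 < c"
    then have "D * c \<le> D * 4" using Dp by (intro mult_left_mono) auto
    then show False using e1' dd by linarith
  qed
  have ext: "s + 4 \<le> x \<and> \<beta> (s + 4) = b"
  proof (rule ccontr)
    assume "\<not> (s + 4 \<le> x \<and> \<beta> (s + 4) = b)"
    then have "Lc x \<beta> (Suc b) \<le> s + 4" using Lc_ext[OF mono s] b_def by simp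
    then show False using c4 unfolding c_def by linarith
  qed
  define u where "u = s + 4"
  have ux: "u \<le> x" and bu: "\<beta> u = b" using ext u_def by auto
  have "b < u" using UD[of u] ux bu u_def by simp
  then have sbx: "Suc b \<le> x" using ux by simp
  have e2: "(real u - real (Suc b)) * (l (Suc b) + l (Suc (Suc b))) \<le> (real u - real b) * (l b + l (Suc b))"
    using BR[OF ux sbx] bu by simp
  have m: "l (Suc b) \<le> l (Suc (Suc b))" using Lc_mono[of "Suc b" "Suc (Suc b)"] by simp
  have e3: "(D + 3) * (2 * (real s + c)) \<le> (D + 3) * (l (Suc b) + l (Suc (Suc b)))"
    using m Dp unfolding c_def by (intro mult_left_mono) auto
  have e4: "(D + 3) * (2 * (real s + c)) \<le> (D + 4) * (2 * real s + c)"
    using e2 e3 l2 unfolding D_def c_def u_def by (simp add: algebra_simps)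
  then have "D * c + 2 * c \<le> 2 * real s" by (simp add: algebra_simps)
  then show False using e1' c4 by linarith
qed


lemma triple: assumes k1: "1 \<le> k" and Q: "\<forall>v<2*k. \<beta> v = v div 2" and kx: "2*k \<le> x"
  and t: "\<beta> (2*k) = k - 1" shows False
proof -
  define K where "K = real k"
  have lo: "\<forall>w<2*k+1. \<beta> w < k"
  proof (intro allI impI)
    fix w assume "w < 2*k+1"
    then show "\<beta> w < k" using Q t k1 by (cases "w = 2*k") auto
  qed
  have a1: "Lc x \<beta> (k - 1) = 2*k - 2"
    by (rule Lc_eq[OF mono]) (use Q kx k1 in \<open>auto\<close>)
  then have la1: "l (k-1) = 2*K - 2" using k1 unfolding K_def by (simp add: of_nat_diff)
  have "2*k+1 \<le> Lc x \<beta> k" by (rule Lc_lower) (use lo kx in auto)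
  then have lk: "2*K+1 \<le> l k" unfolding K_def by simp
  have sk1: "Suc (k - 1) = k" using k1 by simp
  show False
  proof (cases "5 \<le> k")
    case True
    have a2: "Lc x \<beta> (k - 2) = 2*k - 4"
      by (rule Lc_eq[OF mono]) (use Q kx True in \<open>auto\<close>)
    then have la2: "l (k-2) = 2*K - 4" using True unfolding K_def by (simp add: of_nat_diff)
    have sk2: "Suc (k - 2) = k - 1" using True by simp
    have v: "2*k - 3 \<le> x" using kx by simp
    have bv: "\<beta> (2*k-3) = k - 2" using Q True by auto
    have "(real (2*k-3) - real (k-1)) * (l (k-1) + l (Suc (k-1))) \<le>
          (real (2*k-3) - real (\<beta> (2*k-3))) * (l (\<beta> (2*k-3)) + l (Suc (\<beta> (2*k-3))))"
      by (rule BR[OF v]) (use kx in simp)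
    moreover have h1: "real (2*k-3) - real (k-1) = K - 2" using True unfolding K_def by (simp add: of_nat_diff)
    moreover have h2: "real (2*k-3) - real (k-2) = K - 1" using True unfolding K_def by (simp add: of_nat_diff)
    ultimately have "(K - 2) * (l (k-1) + l k) \<le> (K - 1) * (l (k-2) + l (k-1))"
      unfolding bv sk1 sk2 by (simp add: K_def)
    then have e: "(K - 2) * (2*K - 2 + l k) \<le> (K - 1) * (4*K - 6)"
      unfolding la1 la2 by (simp add: algebra_simps)
    have "(K - 2) * (2*K + 1) \<le> (K - 2) * (l k)" using lk True unfolding K_def
      by (intro mult_left_mono) auto
    then have "(K - 2) * (4*K - 1) \<le> (K - 1) * (4*K - 6)" using e by (simp add: algebra_simps)
    then have "K \<le> 4" by (simp add: algebra_simps)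
    then show False using True unfolding K_def by simp
  next
    case False
    have s: "2*k+1 \<le> x" using False x10 by simp
    have v: "2*k \<le> x" using kx by simp
    have kxx: "k \<le> x" using kx by simp
    have "(real (2*k) - real k) * (l k + l (Suc k)) \<le>
          (real (2*k) - real (\<beta> (2*k))) * (l (\<beta> (2*k)) + l (Suc (\<beta> (2*k))))"
      by (rule BR[OF v kxx])
    moreover have "real (2*k) - real (k-1) = K + 1" using k1 unfolding K_def by (simp add: of_nat_diff)
    ultimately have "K * (l k + l (Suc k)) \<le> (K + 1) * (l (k-1) + l k)"
      unfolding t sk1 by (simp add: K_def)
    then have e: "K * (l k + l (Suc k)) \<le> (K + 1) * (2*K - 2 + l k)"
      unfolding la1 .
    have "(K - 1) * (2*K + 1) \<le> (K - 1) * (l k)" using lk k1 unfolding K_def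
      by (intro mult_left_mono) auto
    then have "K * (l (Suc k) - l k) \<le> K - 1" using e by (simp add: algebra_simps)
    moreover have "0 \<le> l (Suc k) - l k" using Lc_mono[of k "Suc k"] by simp
    ultimately have "l (Suc k) - l k < 1" using k1 unfolding K_def
      by (smt (verit) mult_le_cancel_left1 of_nat_0_less_iff of_nat_1 of_nat_le_iff)
    then have "real (Lc x \<beta> (Suc k)) < real (Lc x \<beta> k + 1)" by simp
    then have "Lc x \<beta> (Suc k) < Lc x \<beta> k + 1" by (simp only: of_nat_less_iff)
    then have eqk: "Lc x \<beta> (Suc k) = Lc x \<beta> k" using Lc_mono[of k "Suc k" x \<beta>] by simp
    have ge: "k - 1 \<le> \<beta> (2*k+1)" using mono s t unfolding monob_def by (metis le_add1)
    consider "\<beta> (2*k+1) = k - 1" | "\<beta> (2*k+1) = k" | "k + 1 \<le> \<beta> (2*k+1)" using ge k1 by linarith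
    then show False
    proof cases
      case 1
      have lo2: "\<forall>w<2*k+2. \<beta> w < k"
      proof (intro allI impI)
        fix w assume "w < 2*k+2"
        then show "\<beta> w < k" using lo 1 k1 by (cases "w = 2*k+1") auto
      qed
      have "2*k+2 \<le> Lc x \<beta> k" by (rule Lc_lower) (use lo2 s in auto)
      then have lk2: "2*K+2 \<le> l k" unfolding K_def by simp
      have "(real (2*k+1) - real k) * (l k + l (Suc k)) \<le>
          (real (2*k+1) - real (\<beta> (2*k+1))) * (l (\<beta> (2*k+1)) + l (Suc (\<beta> (2*k+1))))"
        by (rule BR[OF s kxx])
      moreover have "real (2*k+1) - real (k-1) = K + 2" using k1 unfolding K_def by (simp add: of_nat_diff)
      ultimately have "(K + 1) * (l k + l (Suc k)) \<le> (K + 2) * (l (k-1) + l k)"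
        unfolding 1 sk1 by (simp add: K_def)
      then have e: "(K + 1) * (2 * l k) \<le> (K + 2) * (2*K - 2 + l k)"
        unfolding la1 eqk by simp
      then have "K * l k \<le> 2*K*K + 2*K - 4" by (simp add: algebra_simps)
      moreover have "K * (2*K+2) \<le> K * l k" using lk2 unfolding K_def by (intro mult_left_mono) auto
      ultimately show False by (simp add: algebra_simps)
    next
      case 2
      have "Lc x \<beta> k + 1 \<le> Lc x \<beta> (Suc k)" using Lc_step[OF s, of \<beta> k] 2 by simp
      then show False using eqk by simp
    next
      case 3
      show False
      proof (rule gap[OF s])
        show "1 \<le> \<beta> (2 * k + 1)" using 3 by simp
        show "2 * (2 * k + 1 - \<beta> (2 * k + 1)) < 2 * k + 1" using 3 by simp
        show "\<forall>w<2 * k + 1. \<beta> w + 1 < \<beta> (2 * k + 1)" using lo 3 by fastforce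
      qed
    qed
  qed
qed


lemma single_top: assumes k3: "3 \<le> k" and Q: "\<forall>v<2*k. \<beta> v = v div 2" and kx: "2*k \<le> x"
  and t: "\<beta> (2*k) = k" and top: "Lc x \<beta> (Suc k) = 2*k+1" shows False
proof -
  define K where "K = real k"
  have a1: "Lc x \<beta> (k - 1) = 2*k - 2"
    by (rule Lc_eq[OF mono]) (use Q kx k3 in \<open>auto\<close>)
  then have la1: "l (k-1) = 2*K - 2" using k3 unfolding K_def by (simp add: of_nat_diff)
  have a0: "Lc x \<beta> k = 2*k"
    by (rule Lc_eq[OF mono]) (use Q kx t in \<open>auto\<close>)
  have sk1: "Suc (k - 1) = k" using k3 by simp
  have "(real (2*k) - real (k-1)) * (l (k-1) + l (Suc (k-1))) \<le>
          (real (2*k) - real (\<beta> (2*k))) * (l (\<beta> (2*k)) + l (Suc (\<beta> (2*k))))"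
    by (rule BR[OF kx]) (use kx in simp)
  moreover have "real (2*k) - real (k-1) = K + 1" using k3 unfolding K_def by (simp add: of_nat_diff)
  ultimately have "(K + 1) * (l (k-1) + l k) \<le> K * (l k + l (Suc k))"
    unfolding t sk1 by (simp add: K_def)
  then have "(K + 1) * (4*K - 2) \<le> K * (4*K + 1)"
    unfolding la1 a0 top K_def by (simp add: algebra_simps)
  then have "K \<le> 2" by (simp add: algebra_simps)
  then show False using k3 unfolding K_def by simp
qed

lemma single: assumes k1: "1 \<le> k" and Q: "\<forall>v<2*k. \<beta> v = v div 2" and sx: "2*k+1 \<le> x"
  and t: "\<beta> (2*k) = k" and t1: "\<beta> (2*k+1) = k+1" shows False
proof -
  define K where "K = real k"
  have lo: "\<forall>w<2*k+1. \<beta> w < Suc k"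
  proof (intro allI impI)
    fix w assume "w < 2*k+1"
    then show "\<beta> w < Suc k" using Q t by (cases "w = 2*k") auto
  qed
  have top: "Lc x \<beta> (Suc k) = 2*k+1"
    by (rule Lc_eq[OF mono sx]) (use lo t1 in auto)
  show False
  proof (cases "3 \<le> k")
    case True
    show False by (rule single_top[OF True Q _ t top]) (use sx in simp)
  next
    case False
    have a0: "Lc x \<beta> k = 2*k"
      by (rule Lc_eq[OF mono]) (use Q sx t in \<open>auto\<close>)
    define c where "c = l (Suc (Suc k)) - (2*K+1)"
    have kxx: "k \<le> x" using sx by simp
    have "(real (2*k+1) - real k) * (l k + l (Suc k)) \<le>
          (real (2*k+1) - real (\<beta> (2*k+1))) * (l (\<beta> (2*k+1)) + l (Suc (\<beta> (2*k+1))))"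
      by (rule BR[OF sx kxx])
    then have "(K + 1) * (l k + l (Suc k)) \<le> K * (l (Suc k) + l (Suc (Suc k)))"
      unfolding t1 by (simp add: K_def)
    then have i1: "(K + 1) * (4*K + 1) \<le> K * (4*K + 2 + c)"
      unfolding a0 top c_def K_def by (simp add: algebra_simps)
    have c3: "3 < c"
    proof (rule ccontr)
      assume "\<not> 3 < c"
      then have "K * c \<le> K * 3" unfolding K_def by (intro mult_left_mono) auto
      then show False using i1 by (simp add: algebra_simps)
    qed
    have ext: "2*k+1 + 3 \<le> x \<and> \<beta> (2*k+1 + 3) = k+1"
    proof (rule ccontr)
      assume "\<not> (2*k+1 + 3 \<le> x \<and> \<beta> (2*k+1 + 3) = k+1)"
      then have "Lc x \<beta> (Suc (k+1)) \<le> 2*k+1 + 3" using Lc_ext[OF mono sx t1, of 3] by simp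
      then show False using c3 unfolding c_def K_def by simp
    qed
    define u where "u = 2*k+1+3"
    have ux: "u \<le> x" and bu: "\<beta> u = k+1" using ext unfolding u_def by blast+
    have kx2: "k + 2 \<le> x" using ux u_def by simp
    have "(real u - real (k+2)) * (l (k+2) + l (Suc (k+2))) \<le>
          (real u - real (\<beta> u)) * (l (\<beta> u) + l (Suc (\<beta> u)))"
      by (rule BR[OF ux kx2])
    moreover have "real u - real (k+2) = K+2" "real u - real (k+1) = K + 3" by (simp_all add: u_def K_def)
    ultimately have e2: "(K + 2) * (l (k+2) + l (Suc (k+2))) \<le> (K + 3) * (l (k+1) + l (k+2))"
      unfolding bu by (simp add: K_def add.commute)
    have m: "l (k+2) \<le> l (Suc (k+2))" using Lc_mono[of "k+2" "Suc (k+2)" x \<beta>] by simp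
    have "(K + 2) * (2 * l (k+2)) \<le> (K + 2) * (l (k+2) + l (Suc (k+2)))"
      using m unfolding K_def by (intro mult_left_mono) auto
    then have h1: "(K + 2) * (2 * l (k+2)) \<le> (K + 3) * (l (k+1) + l (k+2))"
      using e2 by linarith
    have l1: "l (k+1) = 2*K+1" using top unfolding K_def by simp
    have l2: "l (k+2) = 2*K+1+c" unfolding c_def by simp
    have "(K + 2) * (2 * (2*K + 1 + c)) \<le> (K + 3) * (4*K + 2 + c)"
      using h1 unfolding l1 l2 by (simp add: algebra_simps)
    then have i2: "(K + 1) * c \<le> 4*K + 2" by (simp add: algebra_simps)
    have "k = 1 \<or> k = 2" using False k1 by auto
    then show False
    proof
      assume "k = 1" then have "K = 1" unfolding K_def by simp
      then show False using i1 i2 c3 by simp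
    next
      assume "k = 2" then have "K = 2" unfolding K_def by simp
      then show False using i1 i2 c3 by simp
    qed
  qed
qed


lemma step_even: assumes kx: "2*k \<le> x" and Q: "\<forall>v<2*k. \<beta> v = v div 2" shows "\<beta> (2*k) = k"
proof (cases "k = 0")
  case True
  have "\<beta> 0 \<le> \<beta> 1" using mono x10 unfolding monob_def by simp
  moreover have "\<beta> 1 < 1" using UD[of 1] x10 by simp
  ultimately show ?thesis using True by simp
next
  case False
  then have k1: "1 \<le> k" by simp
  have "\<beta> (2*k-1) \<le> \<beta> (2*k)" using mono kx unfolding monob_def by simp
  moreover have "\<beta> (2*k-1) = k - 1" using Q k1 by auto
  ultimately have ge: "k - 1 \<le> \<beta> (2*k)" by simp
  have n1: "\<beta> (2*k) \<noteq> k - 1" using triple[OF k1 Q kx] by blast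
  have n2: "\<not> k + 1 \<le> \<beta> (2*k)"
  proof
    assume h: "k + 1 \<le> \<beta> (2*k)"
    show False
    proof (rule gap[OF kx])
      show "1 \<le> \<beta> (2*k)" using h by simp
      show "2 * (2*k - \<beta> (2*k)) < 2*k" using h k1 by simp
      show "\<forall>w<2*k. \<beta> w + 1 < \<beta> (2*k)" using Q h by fastforce
    qed
  qed
  show ?thesis using ge n1 n2 by linarith
qed

lemma step_odd: assumes kx: "2*k+1 \<le> x" and Q: "\<forall>v<2*k. \<beta> v = v div 2" and t: "\<beta> (2*k) = k"
  shows "\<beta> (2*k+1) = k"
proof (cases "k = 0")
  case True
  then show ?thesis using UD[of 1] x10 by simp
next
  case False
  then have k1: "1 \<le> k" by simp
  have ge: "k \<le> \<beta> (2*k+1)" using mono kx t unfolding monob_def by (metis le_add1)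
  have n1: "\<beta> (2*k+1) \<noteq> k + 1" using single[OF k1 Q kx t] by blast
  have n2: "\<not> k + 2 \<le> \<beta> (2*k+1)"
  proof
    assume h: "k + 2 \<le> \<beta> (2*k+1)"
    show False
    proof (rule gap[OF kx])
      show "1 \<le> \<beta> (2*k+1)" using h by simp
      show "2 * (2*k+1 - \<beta> (2*k+1)) < 2*k+1" using h k1 by simp
      have "\<forall>w<2*k+1. \<beta> w \<le> k"
      proof (intro allI impI)
        fix w assume "w < 2*k+1"
        then show "\<beta> w \<le> k" using Q t by (cases "w = 2*k") auto
      qed
      then show "\<forall>w<2*k+1. \<beta> w + 1 < \<beta> (2*k+1)" using h by fastforce
    qed
  qed
  show ?thesis using ge n1 n2 by linarith
qed

lemma half_upto: "\<forall>v<2*k. v \<le> x \<longrightarrow> \<beta> v = v div 2"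
proof (induction k)
  case 0
  then show ?case by simp
next
  case (Suc k)
  show ?case
  proof (intro allI impI)
    fix v assume v: "v < 2 * Suc k" and vx: "v \<le> x"
    show "\<beta> v = v div 2"
    proof (cases "v < 2*k")
      case True then show ?thesis using Suc.IH vx by simp
    next
      case False
      have kx: "2*k \<le> x" using False vx by simp
      have Q: "\<forall>v<2*k. \<beta> v = v div 2" using Suc.IH kx by simp
      have t: "\<beta> (2*k) = k" by (rule step_even[OF kx Q])
      show ?thesis
      proof (cases "v = 2*k")
        case True then show ?thesis using t by simp
      next
        case False2: False
        then have "v = 2*k+1" using v False by simp
        then show ?thesis using step_odd[OF _ Q t] vx by simp
      qed
    qed
  qed
qed

lemma half: "v \<le> x \<Longrightarrow> \<beta> v = v div 2"
  using half_upto[of "Suc v"] by simp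

lemma not_even: "even x \<Longrightarrow> False"
proof -
  assume "even x"
  then obtain k where xk: "x = 2*k" by blast
  have k3: "3 \<le> k" using x10 xk by simp
  have Q: "\<forall>v<2*k. \<beta> v = v div 2" using half xk by simp
  have t: "\<beta> (2*k) = k" using half xk by simp
  have "Lc x \<beta> (Suc k) = x + 1" by (rule Lc_all) (use half xk in auto)
  then have top: "Lc x \<beta> (Suc k) = 2*k+1" using xk by simp
  show False by (rule single_top[OF k3 Q _ t top]) (use xk in simp)
qed

end

theorem mainTheorem20:
  fixes x :: nat
  assumes "x \<ge> 10"
  shows "(\<forall>\<beta>. symmetric_equilibrium x \<beta> \<longrightarrow> (\<forall>v\<le>x. \<beta> v = v div 2)) \<and>
         (even x \<longrightarrow> \<not> (\<exists>\<beta>. symmetric_equilibrium x \<beta>))"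
proof (intro conjI allI impI)
  fix \<beta> v assume "symmetric_equilibrium x \<beta>" "v \<le> x"
  then show "\<beta> v = v div 2" using eqm.half[of x \<beta> v] assms unfolding eqm_def by simp
next
  assume ev: "even x"
  show "\<not> (\<exists>\<beta>. symmetric_equilibrium x \<beta>)"
  proof
    assume "\<exists>\<beta>. symmetric_equilibrium x \<beta>"
    then obtain \<beta> where "symmetric_equilibrium x \<beta>" by blast
    then show False using eqm.not_even[of x \<beta>] assms ev unfolding eqm_def by simp
  qed
qed

end
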